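(* Let $(\Omega,\Sigma,\mu)$ be a measure space and suppose $T:M^{2,\infty}[0,1]\to L^{2,\infty}(\Omega,\Sigma,\mu)$ is an embedding (an isomorphism onto its range). Then $(Th_n)_{n\ge1}$ is not a pairwise disjoint sequence.
   Context: For a measure space $(\Omega,\Sigma,\mu)$ and $1<p<\infty$, $L^{p,\infty}(\Omega,\Sigma,\mu)$ is the space of (equivalence classes of) measurable $f$ with $\|f\|=\sup_{c>0}c\,(\mu\{|f|>c\})^{1/p}<\infty$, a Banach space under an equivalent norm, and $M^{p,\infty}(\Omega,\Sigma,\mu)$ is its closed subspace generated by the characteristic functions $\chi_\sigma$ of measurable sets of finite measure; $M^{2,\infty}[0,1]$ refers to $[0,1]$ with Lebesgue measure. Two functions $f,g$ are disjoint if $|f|\wedge|g|=0$. $(h_n)$ are the $L^\infty$-normalized Haar functions on $[0,1]$: $h_1\equiv1$, and for $n=2^k+l$ with $k\ge0$, $1\le l\le 2^k$, $h_n=1$ on $[\frac{2l-2}{2^{k+1}},\frac{2l-1}{2^{k+1}})$, $h_n=-1$ on $[\frac{2l-1}{2^{k+1}},\frac{2l}{2^{k+1}})$, and $h_n=0$ elsewhere. *)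

theory Defs
  imports "HOL-Analysis.Analysis"
begin

definition weak_norm :: "'a measure \<Rightarrow> real \<Rightarrow> ('a \<Rightarrow> real) \<Rightarrow> ennreal" where
  "weak_norm M p f =
     (SUP c\<in>{0::real<..}.
        (let m = emeasure M {x \<in> space M. c < \<bar>f x\<bar>}
         in if m = \<infinity> then \<infinity> else ennreal (c * (enn2real m) powr (1 / p))))"

definition Lweak :: "'a measure \<Rightarrow> real \<Rightarrow> ('a \<Rightarrow> real) set" where
  "Lweak M p = {f. f \<in> borel_measurable M \<and> weak_norm M p f < \<infinity>}"

definition fin_char_span :: "'a measure \<Rightarrow> ('a \<Rightarrow> real) set" where
  "fin_char_span M = {g. \<exists>(n::nat) (c::nat \<Rightarrow> real) (A::nat \<Rightarrow> 'a set).
       (\<forall>i<n. A i \<in> sets M \<and> emeasure M (A i) < \<infinity>) \<and>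
       g = (\<lambda>x. \<Sum>i<n. c i * indicator (A i) x)}"

definition Mweak :: "'a measure \<Rightarrow> real \<Rightarrow> ('a \<Rightarrow> real) set" where
  "Mweak M p = {f \<in> Lweak M p. \<forall>e>0. \<exists>g \<in> fin_char_span M.
       weak_norm M p (\<lambda>x. f x - g x) < ennreal e}"

text \<open>L^\<infinity>-normalized Haar functions on [0,1], indexed from 1.\<close>
definition haar :: "nat \<Rightarrow> real \<Rightarrow> real" where
  "haar n x =
    (if n = 1 then 1
     else if (\<exists>k l. n = 2^k + l \<and> 1 \<le> l \<and> l \<le> 2^k \<and>
                 (2 * real l - 2) / 2^(k+1) \<le> x \<and> x < (2 * real l - 1) / 2^(k+1)) then 1
     else if (\<exists>k l. n = 2^k + l \<and> 1 \<le> l \<and> l \<le> 2^k \<and>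
                 (2 * real l - 1) / 2^(k+1) \<le> x \<and> x < (2 * real l) / 2^(k+1)) then -1
     else 0)"

end

theory Submission
  imports Defs
begin



definition eps :: "nat \<Rightarrow> nat \<Rightarrow> real" where
  "eps b i = (if odd (b div 2^i) then -1 else 1)"

definition Xs :: "nat \<Rightarrow> (nat \<Rightarrow> real) \<Rightarrow> nat \<Rightarrow> real" where
  "Xs N c b = (\<Sum>i<N. c i * eps b i)"

lemma sum_split_pow2:
  fixes f :: "nat \<Rightarrow> real"
  shows "(\<Sum>b<2^Suc N. f b) = (\<Sum>b<2^N. f b) + (\<Sum>b<2^N. f (b + 2^N))"
proof -
  have "{..<2^Suc N} = {..<2^N} \<union> {2^N..<2^N + 2^N::nat}" by auto
  then have "(\<Sum>b<2^Suc N. f b) = (\<Sum>b<2^N. f b) + (\<Sum>b\<in>{2^N..<2^N + 2^N}. f b)"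
    by (simp add: sum.union_disjoint ivl_disj_int)
  also have "(\<Sum>b\<in>{2^N..<2^N + 2^N}. f b) = (\<Sum>b<2^N. f (b + 2^N))"
    using sum.shift_bounds_nat_ivl[of f 0 "2^N" "2^N"] by (simp add: lessThan_atLeast0 add.commute)
  finally show ?thesis .
qed

lemma eps_low: "b < 2^N \<Longrightarrow> i < N \<Longrightarrow> eps (b + 2^N) i = eps b i"
proof -
  assume b: "b < 2^N" and i: "i < N"
  have "(b + 2^N) div 2^i = b div 2^i + 2^(N-i)"
  proof -
    have "(2::nat)^N = 2^i * 2^(N-i)" using i by (simp add: power_add[symmetric])
    then show ?thesis by simp
  qed
  moreover have "even ((2::nat)^(N-i))" using i by simp
  ultimately show ?thesis unfolding eps_def by simp
qed

lemma eps_top: "b < 2^N \<Longrightarrow> eps (b + 2^N) N = -1 \<and> eps b N = 1"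
  unfolding eps_def by simp

lemma Xs_Suc_low: "b < 2^N \<Longrightarrow> Xs (Suc N) c b = Xs N c b + c N"
  unfolding Xs_def using eps_top[of b N] by simp

lemma Xs_Suc_high: "b < 2^N \<Longrightarrow> Xs (Suc N) c (b + 2^N) = Xs N c b - c N"
  unfolding Xs_def using eps_top[of b N] eps_low[of b N] by simp

lemma Xs_moment2: "(\<Sum>b<2^N. (Xs N c b)^2) = 2^N * (\<Sum>i<N. (c i)^2)"
proof (induction N)
  case 0 then show ?case by (simp add: Xs_def)
next
  case (Suc N)
  have "(\<Sum>b<2^Suc N. (Xs (Suc N) c b)^2) =
        (\<Sum>b<2^N. (Xs N c b + c N)^2 + (Xs N c b - c N)^2)"
    unfolding sum_split_pow2 sum.distrib by (intro arg_cong2[where f="(+)"] sum.cong) (auto simp: Xs_Suc_low Xs_Suc_high)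
  also have "\<dots> = (\<Sum>b<2^N. 2 * (Xs N c b)^2 + 2 * (c N)^2)"
    by (rule sum.cong) (auto simp: power2_eq_square algebra_simps)
  also have "\<dots> = 2 * 2^N * (\<Sum>i<N. (c i)^2) + 2 * 2^N * (c N)^2"
    by (simp add: sum.distrib sum_distrib_left[symmetric] Suc)
  finally show ?case by (simp add: algebra_simps)
qed

lemma Xs_moment4: "(\<Sum>b<2^N. (Xs N c b)^4) \<le> 3 * 2^N * (\<Sum>i<N. (c i)^2)^2"
proof (induction N)
  case 0 then show ?case by (simp add: Xs_def)
next
  case (Suc N)
  define s where "s = (\<Sum>i<N. (c i)^2)"
  have "(\<Sum>b<2^Suc N. (Xs (Suc N) c b)^4) =
        (\<Sum>b<2^N. (Xs N c b + c N)^4 + (Xs N c b - c N)^4)"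
    unfolding sum_split_pow2 sum.distrib by (intro arg_cong2[where f="(+)"] sum.cong) (auto simp: Xs_Suc_low Xs_Suc_high)
  also have "\<dots> = (\<Sum>b<2^N. 2 * (Xs N c b)^4 + 12 * (c N)^2 * (Xs N c b)^2 + 2 * (c N)^4)"
    by (rule sum.cong) (auto simp: power_def algebra_simps numeral_eq_Suc)
  also have "\<dots> = 2 * (\<Sum>b<2^N. (Xs N c b)^4) + 12 * (c N)^2 * (\<Sum>b<2^N. (Xs N c b)^2) + 2 * 2^N * (c N)^4"
    by (simp add: sum.distrib sum_distrib_left)
  also have "\<dots> \<le> 2 * (3 * 2^N * s^2) + 12 * (c N)^2 * (2^N * s) + 2 * 2^N * (c N)^4"
    using Suc Xs_moment2[of N c] by (simp add: s_def)
  also have "\<dots> \<le> 3 * 2^Suc N * (s + (c N)^2)^2"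
  proof -
    have "0 \<le> (c N)^4 * 2^N" by simp
    then show ?thesis by (simp add: power2_eq_square power4_eq_xxxx algebra_simps)
  qed
  finally show ?case by (simp add: s_def)
qed

lemma PZ:
  fixes c :: "nat \<Rightarrow> real" and N :: nat
  defines "s2 \<equiv> (\<Sum>i<N. (c i)^2)"
  assumes pos: "s2 > 0"
  shows "3 * 2^N \<le> 16 * real (card {b. b < 2^N \<and> s2/4 < (Xs N c b)^2})"
proof -
  define A where "A = {b. b < 2^N \<and> s2/4 < (Xs N c b)^2}"
  have finA: "finite A" and Asub: "A \<subseteq> {..<2^N}" unfolding A_def by auto
  have "(\<Sum>b<2^N. (Xs N c b)^2) = (\<Sum>b\<in>A. (Xs N c b)^2) + (\<Sum>b\<in>{..<2^N} - A. (Xs N c b)^2)"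
    using Asub by (metis finite_lessThan sum.subset_diff add.commute)
  also have "(\<Sum>b\<in>{..<2^N} - A. (Xs N c b)^2) \<le> (\<Sum>b\<in>{..<2^N} - A. s2/4)"
    by (rule sum_mono) (auto simp: A_def)
  also have "\<dots> \<le> (\<Sum>b\<in>{..<(2::nat)^N}. s2/4)"
    by (rule sum_mono2) (use pos in auto)
  finally have 1: "2^N * s2 \<le> (\<Sum>b\<in>A. (Xs N c b)^2) + 2^N * s2 / 4"
    by (simp add: Xs_moment2 s2_def)
  have "(\<Sum>b\<in>A. 1 * (Xs N c b)^2)^2 \<le> (\<Sum>b\<in>A. 1^2) * (\<Sum>b\<in>A. ((Xs N c b)^2)^2)"
    by (rule Cauchy_Schwarz_ineq_sum)
  also have "(\<Sum>b\<in>A. ((Xs N c b)^2)^2) \<le> (\<Sum>b<2^N. (Xs N c b)^4)"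
  proof -
    have "(\<Sum>b\<in>A. ((Xs N c b)^2)^2) = (\<Sum>b\<in>A. (Xs N c b)^4)"
      by (simp add: power_mult[symmetric])
    also have "\<dots> \<le> (\<Sum>b<2^N. (Xs N c b)^4)"
      by (rule sum_mono2) (use Asub in auto)
    finally show ?thesis .
  qed
  also have "\<dots> \<le> 3 * 2^N * s2^2" using Xs_moment4 by (simp add: s2_def)
  finally have 2: "(\<Sum>b\<in>A. (Xs N c b)^2)^2 \<le> real (card A) * (3 * 2^N * s2^2)"
    by (simp add: mult_left_mono)
  have "3/4 * 2^N * s2 \<le> (\<Sum>b\<in>A. (Xs N c b)^2)" using 1 by simp
  then have "(3/4 * 2^N * s2)^2 \<le> (\<Sum>b\<in>A. (Xs N c b)^2)^2"
    using pos by (intro power_mono) auto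
  with 2 have "(3/4 * 2^N * s2)^2 \<le> real (card A) * (3 * 2^N * s2^2)" by linarith
  then have "(9/16 * 2^N) * (2^N * s2^2) \<le> (3 * real (card A)) * (2^N * s2^2)"
    by (simp add: power2_eq_square algebra_simps)
  then have "9/16 * 2^N \<le> 3 * real (card A)"
    using pos by (subst (asm) mult_le_cancel_right) (auto)
  then show ?thesis unfolding A_def by simp
qed




definition D :: "nat \<Rightarrow> real \<Rightarrow> nat" where
  "D j x = nat \<lfloor>2^j * x\<rfloor>"

lemma D_div:
  assumes "0 \<le> x" "a \<le> j"
  shows "D j x div 2^a = D (j - a) x"
proof -
  have "\<lfloor>2^j * x\<rfloor> div 2^a = \<lfloor>2^j * x / real_of_int (2^a)\<rfloor>"
    by (subst floor_divide_real_eq_div) auto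
  also have "2^j * x / real_of_int (2^a) = 2^(j-a) * x"
    using assms by (simp add: power_diff)
  finally have e: "\<lfloor>2^j * x\<rfloor> div 2^a = \<lfloor>2^(j-a) * x\<rfloor>" .
  have "D j x div 2^a = nat (\<lfloor>2^j * x\<rfloor> div 2^a)"
    unfolding D_def using assms by (simp add: nat_div_distrib nat_power_eq)
  then show ?thesis using e by (simp add: D_def)
qed

lemma D_lt: "0 \<le> x \<Longrightarrow> x < 1 \<Longrightarrow> D j x < 2^j"
proof -
  assume x: "0 \<le> x" "x < 1"
  have "2^j * x < 2^j" using x by simp
  then have "\<lfloor>2^j * x\<rfloor> < 2^j"
    by (metis floor_less_iff of_int_numeral of_int_power)
  then show ?thesis unfolding D_def using x by (simp add: nat_less_iff)
qed

lemma D_eq_iff: "0 \<le> x \<Longrightarrow> D j x = a \<longleftrightarrow> real a / 2^j \<le> x \<and> x < (real a + 1) / 2^j"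
proof -
  assume x: "0 \<le> x"
  have "D j x = a \<longleftrightarrow> \<lfloor>2^j * x\<rfloor> = int a"
    unfolding D_def using x by auto
  also have "\<dots> \<longleftrightarrow> real a \<le> 2^j * x \<and> 2^j * x < real a + 1"
    by (simp add: floor_eq_iff)
  also have "\<dots> \<longleftrightarrow> real a / 2^j \<le> x \<and> x < (real a + 1) / 2^j"
    by (simp add: field_simps)
  finally show ?thesis .
qed

lemma pow_rep_unique:
  fixes k k' l l' :: nat
  assumes "2^k + l = 2^k' + l'" "1 \<le> l" "l \<le> 2^k" "1 \<le> l'" "l' \<le> 2^k'"
  shows "k = k'"
proof (rule ccontr)
  assume "k \<noteq> k'"
  then consider "k < k'" | "k' < k" by linarith
  then show False
  proof cases
    case 1
    then have "(2::nat)^(k+1) \<le> 2^k'" by (intro power_increasing) auto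
    then show False using assms by simp
  next
    case 2
    then have "(2::nat)^(k'+1) \<le> 2^k" by (intro power_increasing) auto
    then show False using assms by simp
  qed
qed

lemma haar_lvl:
  assumes l: "l < 2^k"
  shows "haar (2^k + l + 1) y =
    (if real (2*l) / 2^(k+1) \<le> y \<and> y < (real (2*l) + 1) / 2^(k+1) then 1
     else if real (2*l+1) / 2^(k+1) \<le> y \<and> y < (real (2*l+1) + 1) / 2^(k+1) then -1 else 0)"
proof -
  have n1: "2^k + l + 1 \<noteq> (1::nat)" by simp
  have ex1: "(\<exists>k' l'. 2^k + l + 1 = 2^k' + l' \<and> 1 \<le> l' \<and> l' \<le> 2^k' \<and>
                 (2 * real l' - 2) / 2^(k'+1) \<le> y \<and> y < (2 * real l' - 1) / 2^(k'+1))
        \<longleftrightarrow> real (2*l) / 2^(k+1) \<le> y \<and> y < (real (2*l) + 1) / 2^(k+1)"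
  proof
    assume "\<exists>k' l'. 2^k + l + 1 = 2^k' + l' \<and> 1 \<le> l' \<and> l' \<le> 2^k' \<and>
                 (2 * real l' - 2) / 2^(k'+1) \<le> y \<and> y < (2 * real l' - 1) / 2^(k'+1)"
    then obtain k' l' where h: "2^k + (l + 1) = 2^k' + l'" "1 \<le> l'" "l' \<le> 2^k'"
      "(2 * real l' - 2) / 2^(k'+1) \<le> y" "y < (2 * real l' - 1) / 2^(k'+1)" by auto
    have "k = k'" using pow_rep_unique[OF h(1) _ _ h(2,3)] l by simp
    then have "l' = l + 1" using h(1) by simp
    then show "real (2*l) / 2^(k+1) \<le> y \<and> y < (real (2*l) + 1) / 2^(k+1)"
      using h \<open>k = k'\<close> by (simp add: algebra_simps)
  next
    assume "real (2*l) / 2^(k+1) \<le> y \<and> y < (real (2*l) + 1) / 2^(k+1)"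
    then show "\<exists>k' l'. 2^k + l + 1 = 2^k' + l' \<and> 1 \<le> l' \<and> l' \<le> 2^k' \<and>
                 (2 * real l' - 2) / 2^(k'+1) \<le> y \<and> y < (2 * real l' - 1) / 2^(k'+1)"
      using l by (intro exI[of _ k] exI[of _ "l+1"]) (auto simp: algebra_simps)
  qed
  have ex2: "(\<exists>k' l'. 2^k + l + 1 = 2^k' + l' \<and> 1 \<le> l' \<and> l' \<le> 2^k' \<and>
                 (2 * real l' - 1) / 2^(k'+1) \<le> y \<and> y < (2 * real l') / 2^(k'+1))
        \<longleftrightarrow> real (2*l+1) / 2^(k+1) \<le> y \<and> y < (real (2*l+1) + 1) / 2^(k+1)"
  proof
    assume "\<exists>k' l'. 2^k + l + 1 = 2^k' + l' \<and> 1 \<le> l' \<and> l' \<le> 2^k' \<and>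
                 (2 * real l' - 1) / 2^(k'+1) \<le> y \<and> y < (2 * real l') / 2^(k'+1)"
    then obtain k' l' where h: "2^k + (l + 1) = 2^k' + l'" "1 \<le> l'" "l' \<le> 2^k'"
      "(2 * real l' - 1) / 2^(k'+1) \<le> y" "y < (2 * real l') / 2^(k'+1)" by auto
    have "k = k'" using pow_rep_unique[OF h(1) _ _ h(2,3)] l by simp
    then have "l' = l + 1" using h(1) by simp
    then show "real (2*l+1) / 2^(k+1) \<le> y \<and> y < (real (2*l+1) + 1) / 2^(k+1)"
      using h \<open>k = k'\<close> by (simp add: algebra_simps)
  next
    assume "real (2*l+1) / 2^(k+1) \<le> y \<and> y < (real (2*l+1) + 1) / 2^(k+1)"
    then show "\<exists>k' l'. 2^k + l + 1 = 2^k' + l' \<and> 1 \<le> l' \<and> l' \<le> 2^k' \<and>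
                 (2 * real l' - 1) / 2^(k'+1) \<le> y \<and> y < (2 * real l') / 2^(k'+1)"
      using l by (intro exI[of _ k] exI[of _ "l+1"]) (auto simp: algebra_simps)
  qed
  show ?thesis
    unfolding haar_def using n1 ex1 ex2 by presburger
qed

lemma haar_D:
  assumes "0 \<le> x" "l < 2^k"
  shows "haar (2^k + l + 1) x = (if D (k+1) x = 2*l then 1 else if D (k+1) x = 2*l+1 then -1 else 0)"
  using haar_lvl[OF assms(2), of x] D_eq_iff[OF assms(1), of "k+1" "2*l"] D_eq_iff[OF assms(1), of "k+1" "2*l+1"]
  by simp

lemma haar_sum_D:
  assumes x: "0 \<le> x" "x < 1"
  shows "(\<Sum>l<2^k. a l * haar (2^k + l + 1) x) =
         a (D (k+1) x div 2) * (if even (D (k+1) x) then 1 else -1)"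
proof -
  define d where "d = D (k+1) x"
  have d: "d < 2^(k+1)" using D_lt[OF x] d_def by blast
  then have l0: "d div 2 < 2^k" by auto
  have "(\<Sum>l<2^k. a l * haar (2^k + l + 1) x) =
        (\<Sum>l<2^k. if l = d div 2 then a (d div 2) * (if even d then 1 else -1) else 0)"
  proof (rule sum.cong)
    fix l assume "l \<in> {..<(2::nat)^k}"
    then show "a l * haar (2^k + l + 1) x = (if l = d div 2 then a (d div 2) * (if even d then 1 else -1) else 0)"
      using haar_D[OF x(1), of l k] unfolding d_def[symmetric] by auto
  qed simp
  also have "\<dots> = a (d div 2) * (if even d then 1 else -1)"
    using l0 by (simp add: sum.delta)
  finally show ?thesis by (simp add: d_def)
qed




lemma Ico_D_eq: "{real w / 2^K ..< (real w + 1) / 2^K} = {x. 0 \<le> x \<and> D K x = w}"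
proof -
  have "x \<in> {real w / 2^K ..< (real w + 1) / 2^K} \<Longrightarrow> 0 \<le> x" for x
  proof -
    assume "x \<in> {real w / 2^K ..< (real w + 1) / 2^K}"
    then have "real w / 2^K \<le> x" by simp
    moreover have "0 \<le> real w / 2^K" by simp
    ultimately show "0 \<le> x" by linarith
  qed
  note h = this
  show ?thesis
  proof (intro set_eqI iffI)
    fix x assume x: "x \<in> {real w / 2^K ..< (real w + 1) / 2^K}"
    then have "0 \<le> x" by (rule h)
    then show "x \<in> {x. 0 \<le> x \<and> D K x = w}" using x D_eq_iff[of x K w] by simp
  next
    fix x assume x: "x \<in> {x. 0 \<le> x \<and> D K x = w}"
    then show "x \<in> {real w / 2^K ..< (real w + 1) / 2^K}" using D_eq_iff[of x K w] by simp
  qed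
qed

lemma meas_D:
  "emeasure (lebesgue_on {0..1}) {x \<in> {0..1}. x < 1 \<and> P (D K x)} =
     ennreal (real (card {w. w < 2^K \<and> P w}) / 2^K)"
proof -
  define W where "W = {w. w < 2^K \<and> P w}"
  define I where "I = (\<lambda>w::nat. {real w / 2^K ..< (real w + 1) / 2^K})"
  have S: "{x \<in> {0..1}. x < 1 \<and> P (D K x)} = (\<Union>w\<in>W. I w)"
  proof (intro set_eqI iffI)
    fix x assume x: "x \<in> {x \<in> {0..1}. x < 1 \<and> P (D K x)}"
    then have "D K x \<in> W" using D_lt[of x K] by (auto simp: W_def)
    moreover have "x \<in> I (D K x)" using x unfolding I_def Ico_D_eq by simp
    ultimately show "x \<in> (\<Union>w\<in>W. I w)" by blast
  next
    fix x assume "x \<in> (\<Union>w\<in>W. I w)"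
    then obtain w where w: "w \<in> W" "x \<in> I w" by blast
    have "x \<in> {x. 0 \<le> x \<and> D K x = w}" using w(2) unfolding I_def Ico_D_eq .
    then have x0: "0 \<le> x" "D K x = w" by simp_all
    have "w + 1 \<le> (2::nat)^K" using w(1) unfolding W_def by simp
    then have "real (w + 1) \<le> real ((2::nat)^K)" by (simp only: of_nat_le_iff)
    then have "real w + 1 \<le> 2^K" by simp
    then have "(real w + 1) / 2^K \<le> 1" by simp
    moreover have "x < (real w + 1) / 2^K" using w(2) unfolding I_def by simp
    ultimately have "x < 1" by linarith
    then show "x \<in> {x \<in> {0..1}. x < 1 \<and> P (D K x)}" using x0 w(1) W_def by auto
  qed
  have sub: "(\<Union>w\<in>W. I w) \<subseteq> {0..1}" using S by blast
  have "emeasure (lebesgue_on {0..1}) (\<Union>w\<in>W. I w) = emeasure lebesgue (\<Union>w\<in>W. I w)"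
    by (rule emeasure_restrict_space) (use sub in auto)
  also have "\<dots> = emeasure lborel (\<Union>w\<in>W. I w)"
    by (simp add: I_def)
  also have "\<dots> = (\<Sum>w\<in>W. emeasure lborel (I w))"
  proof (rule sum_emeasure[symmetric])
    show "I ` W \<subseteq> sets lborel" by (auto simp: I_def)
    show "disjoint_family_on I W"
      unfolding disjoint_family_on_def I_def Ico_D_eq by auto
    show "finite W" by (simp add: W_def)
  qed
  also have "\<dots> = (\<Sum>w\<in>W. ennreal (1 / 2^K))"
  proof (rule sum.cong)
    fix w assume "w \<in> W"
    have le: "real w / 2^K \<le> (real w + 1) / 2^K" by (simp add: divide_right_mono)
    have "(real w + 1) / 2^K - real w / 2^K = 1 / 2^K" by (simp add: field_simps)
    then show "emeasure lborel (I w) = ennreal (1 / 2^K)"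
      unfolding I_def using emeasure_lborel_Ico[OF le] by simp
  qed simp
  also have "\<dots> = ennreal (real (card W) / 2^K)"
    by (simp add: ennreal_of_nat_eq_real_of_nat ennreal_mult'[symmetric])
  finally show ?thesis using S W_def by simp
qed




lemma wn_le:
  assumes B: "B \<ge> 0" and h: "\<And>s. s > 0 \<Longrightarrow> emeasure M {x \<in> space M. s < \<bar>g x\<bar>} \<le> ennreal (B / s^2)"
  shows "weak_norm M 2 g \<le> ennreal (sqrt B)"
  unfolding weak_norm_def Let_def
proof (rule SUP_least)
  fix s :: real assume "s \<in> {0<..}"
  then have s: "s > 0" by simp
  define m where "m = emeasure M {x \<in> space M. s < \<bar>g x\<bar>}"
  have mle: "m \<le> ennreal (B / s^2)" using h[OF s] m_def by simp
  then have mfin: "m \<noteq> \<infinity>" using ennreal_less_top[of "B / s^2"] by (auto simp: top_unique)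
  have "enn2real m \<le> enn2real (ennreal (B / s^2))"
    by (rule enn2real_mono[OF mle]) simp
  then have "enn2real m \<le> B / s^2" using B by simp
  then have "sqrt (enn2real m) \<le> sqrt (B / s^2)" by simp
  also have "sqrt (B / s^2) = sqrt B / s" using s by (simp add: real_sqrt_divide)
  finally have "s * sqrt (enn2real m) \<le> sqrt B" using s by (simp add: field_simps)
  then show "(if m = \<infinity> then \<infinity> else ennreal (s * enn2real m powr (1 / 2))) \<le> ennreal (sqrt B)"
    using mfin by (simp add: powr_half_sqrt ennreal_leI)
qed

lemma wn_meas:
  assumes wn: "weak_norm M 2 g \<le> ennreal w" and w: "w \<ge> 0" and s: "s > 0"
  shows "emeasure M {x \<in> space M. s < \<bar>g x\<bar>} \<le> ennreal ((w / s)^2)"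
proof -
  define m where "m = emeasure M {x \<in> space M. s < \<bar>g x\<bar>}"
  have "(if m = \<infinity> then \<infinity> else ennreal (s * enn2real m powr (1 / 2))) \<le> weak_norm M 2 g"
    unfolding weak_norm_def Let_def m_def using s by (intro SUP_upper2[of s]) auto
  also note wn
  finally have 1: "(if m = \<infinity> then \<infinity> else ennreal (s * enn2real m powr (1 / 2))) \<le> ennreal w" .
  then have mfin: "m \<noteq> \<infinity>" by (auto split: if_splits simp: top_unique)
  then have "ennreal (s * sqrt (enn2real m)) \<le> ennreal w" using 1 by (simp add: powr_half_sqrt)
  then have "s * sqrt (enn2real m) \<le> w" using w by (simp add: ennreal_le_iff)
  then have "sqrt (enn2real m) \<le> w / s" using s by (simp add: field_simps)
  then have "(sqrt (enn2real m))^2 \<le> (w / s)^2" by (intro power_mono) auto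
  then have "enn2real m \<le> (w / s)^2" by simp
  then have "ennreal (enn2real m) \<le> ennreal ((w / s)^2)" by (rule ennreal_leI)
  then show ?thesis using mfin by (simp add: m_def[symmetric] ennreal_enn2real_if split: if_splits)
qed

lemma wn_ge:
  assumes s: "s > 0" and m: "emeasure M {x \<in> space M. s < \<bar>g x\<bar>} = ennreal m" and m0: "m \<ge> 0"
  shows "ennreal (s * sqrt m) \<le> weak_norm M 2 g"
proof -
  have "(let mm = emeasure M {x \<in> space M. s < \<bar>g x\<bar>} in
          if mm = \<infinity> then \<infinity> else ennreal (s * enn2real mm powr (1 / 2))) \<le> weak_norm M 2 g"
    unfolding weak_norm_def using s by (intro SUP_upper) auto
  then show ?thesis using m m0 by (simp add: Let_def powr_half_sqrt)
qed




lemma sum_lessThan_add_nat: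
  fixes h :: "nat \<Rightarrow> real"
  shows "(\<Sum>i<n+n'. h i) = (\<Sum>i<n. h i) + (\<Sum>i<n'. h (n+i))"
  by (induction n') auto

lemma fcs_zero: "(\<lambda>y. 0) \<in> fin_char_span M"
  unfolding fin_char_span_def by (rule CollectI, rule exI[of _ 0]) auto

lemma fcs_lin:
  assumes "f \<in> fin_char_span M" "g \<in> fin_char_span M"
  shows "(\<lambda>y. a * f y + b * g y) \<in> fin_char_span M"
proof -
  obtain n :: nat and c :: "nat \<Rightarrow> real" and A where f: "\<forall>i<n. A i \<in> sets M \<and> emeasure M (A i) < \<infinity>"
    "f = (\<lambda>x. \<Sum>i<n. c i * indicator (A i) x)"
    using assms(1) unfolding fin_char_span_def mem_Collect_eq by (elim exE conjE) blast
  obtain n' :: nat and c' :: "nat \<Rightarrow> real" and A' where g: "\<forall>i<n'. A' i \<in> sets M \<and> emeasure M (A' i) < \<infinity>"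
    "g = (\<lambda>x. \<Sum>i<n'. c' i * indicator (A' i) x)"
    using assms(2) unfolding fin_char_span_def mem_Collect_eq by (elim exE conjE) blast
  define c'' where "c'' i = (if i < n then a * c i else b * c' (i - n))" for i
  define A'' where "A'' i = (if i < n then A i else A' (i - n))" for i
  have 1: "\<forall>i<n+n'. A'' i \<in> sets M \<and> emeasure M (A'' i) < \<infinity>"
    using f(1) g(1) unfolding A''_def by auto
  have 2: "(\<lambda>y. a * f y + b * g y) = (\<lambda>x. \<Sum>i<n+n'. c'' i * indicator (A'' i) x)"
  proof
    fix x
    have "(\<Sum>i<n+n'. c'' i * indicator (A'' i) x) =
       (\<Sum>i<n. c'' i * indicator (A'' i) x) + (\<Sum>i<n'. c'' (n+i) * indicator (A'' (n+i)) x)"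
      by (rule sum_lessThan_add_nat)
    also have "(\<Sum>i<n. c'' i * indicator (A'' i) x) = a * f x"
      unfolding f(2) sum_distrib_left by (rule sum.cong) (auto simp: c''_def A''_def)
    also have "(\<Sum>i<n'. c'' (n+i) * indicator (A'' (n+i)) x) = b * g x"
      unfolding g(2) sum_distrib_left by (rule sum.cong) (auto simp: c''_def A''_def)
    finally show "a * f x + b * g x = (\<Sum>i<n+n'. c'' i * indicator (A'' i) x)" by simp
  qed
  show ?thesis unfolding fin_char_span_def mem_Collect_eq using 1 2 by (intro exI conjI)
qed

lemma fcs_ind:
  assumes "A \<in> sets M" "emeasure M A < \<infinity>"
  shows "indicator A \<in> fin_char_span M"
proof -
  have "(indicator A :: 'a \<Rightarrow> real) = (\<lambda>x. \<Sum>i<(1::nat). (\<lambda>_. 1::real) i * indicator ((\<lambda>_. A) i) x)" by (rule ext) simp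
  then show ?thesis unfolding fin_char_span_def using assms
    by (intro CollectI exI[of _ 1] exI[of _ "\<lambda>_. 1::real"] exI[of _ "\<lambda>_. A"]) auto
qed

lemma fcs_sum:
  assumes "finite S" "\<forall>n\<in>S. g n \<in> fin_char_span M"
  shows "(\<lambda>y. \<Sum>n\<in>S. a n * g n y) \<in> fin_char_span M"
  using assms
proof (induction S rule: finite_induct)
  case empty then show ?case using fcs_zero by simp
next
  case (insert n S)
  have "(\<lambda>y. \<Sum>n\<in>insert n S. a n * g n y) = (\<lambda>y. 1 * (\<lambda>y. \<Sum>n\<in>S. a n * g n y) y + a n * g n y)"
    using insert by (simp add: add.commute)
  moreover have "g n \<in> fin_char_span M" using insert.prems by simp
  moreover have "(\<lambda>y. \<Sum>n\<in>S. a n * g n y) \<in> fin_char_span M" using insert.IH insert.prems by simp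
  ultimately show ?case by (simp only:) (rule fcs_lin)
qed

lemma space_L01: "space (lebesgue_on {0..1::real}) = {0..1}" by simp

lemma emeasure_L01_le1: "emeasure (lebesgue_on {0..1::real}) A \<le> 1"
proof -
  have "emeasure (lebesgue_on {0..1::real}) A \<le> emeasure (lebesgue_on {0..1::real}) {0..1}"
  proof (cases "A \<in> sets (lebesgue_on {0..1::real})")
    case True
    then have "A \<subseteq> space (lebesgue_on {0..1::real})" by (rule sets.sets_into_space)
    then show ?thesis by (intro emeasure_mono) auto
  next
    case False
    then show ?thesis by (simp add: emeasure_notin_sets)
  qed
  also have "\<dots> = emeasure lebesgue {0..1::real}"
    by (rule emeasure_restrict_space) auto
  also have "\<dots> = 1" by simp
  finally show ?thesis .
qed

lemma ind_L01:
  fixes a b :: real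
  assumes "0 \<le> a" "a \<le> b" "b \<le> 1"
  shows "indicator {a..<b} \<in> fin_char_span (lebesgue_on {0..1})"
proof (rule fcs_ind)
  show "{a..<b} \<in> sets (lebesgue_on {0..1})"
    using assms by (subst sets_restrict_space_iff) auto
  show "emeasure (lebesgue_on {0..1}) {a..<b} < \<infinity>"
    by (rule le_less_trans[OF emeasure_L01_le1]) simp
qed

lemma haar_fcs:
  assumes l: "l < 2^k"
  shows "haar (2^k + l + 1) \<in> fin_char_span (lebesgue_on {0..1})"
proof -
  define a where "a = real (2*l) / 2^(k+1)"
  define b where "b = (real (2*l) + 1) / 2^(k+1)"
  define c where "c = (real (2*l+1) + 1) / 2^(k+1)"
  have bb: "real (2*l+1) / 2^(k+1) = b" unfolding b_def by simp
  have e: "haar (2^k + l + 1) = (\<lambda>y. 1 * indicator {a..<b} y + (-1) * indicator {b..<c} y)"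
  proof
    fix y
    have "a \<le> b" "b \<le> c" unfolding a_def b_def c_def by (intro divide_right_mono; simp)+
    then show "haar (2^k + l + 1) y = 1 * indicator {a..<b} y + (-1) * indicator {b..<c} y"
      unfolding haar_lvl[OF l] a_def[symmetric] b_def[symmetric] c_def[symmetric] bb
      by (auto simp: indicator_def)
  qed
  moreover have "0 \<le> a" unfolding a_def by simp
  moreover have "a \<le> b" "b \<le> c" unfolding a_def b_def c_def by (intro divide_right_mono; simp)+
  moreover have "c \<le> 1"
  proof -
    have "2*l+2 \<le> (2::nat)^(k+1)" using l by simp
    then have "real (2*l+2) \<le> real ((2::nat)^(k+1))" by (simp only: of_nat_le_iff)
    then show ?thesis unfolding c_def by simp
  qed
  ultimately have "indicator {a..<b} \<in> fin_char_span (lebesgue_on {0..1})"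
      "indicator {b..<c} \<in> fin_char_span (lebesgue_on {0..1})"
    by (auto intro!: ind_L01)
  then show ?thesis unfolding e by (rule fcs_lin)
qed




lemma wn_zero: "weak_norm M 2 (\<lambda>x. 0) = 0"
proof -
  have "weak_norm M 2 (\<lambda>x. 0) \<le> ennreal (sqrt 0)"
    by (rule wn_le) auto
  then show ?thesis by simp
qed

lemma fcs_Mweak:
  fixes g :: "real \<Rightarrow> real"
  assumes "g \<in> fin_char_span (lebesgue_on {0..1})"
  shows "g \<in> Mweak (lebesgue_on {0..1}) 2"
proof -
  obtain n :: nat and c :: "nat \<Rightarrow> real" and A where
    A: "\<forall>i<n. A i \<in> sets (lebesgue_on {0..1}) \<and> emeasure (lebesgue_on {0..1}) (A i) < \<infinity>"
    and g: "g = (\<lambda>x. \<Sum>i<n. c i * indicator (A i) x)"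
    using assms unfolding fin_char_span_def mem_Collect_eq by (elim exE conjE) blast
  have meas: "g \<in> borel_measurable (lebesgue_on {0..1})"
    unfolding g by (intro borel_measurable_sum borel_measurable_times borel_measurable_const borel_measurable_indicator) (use A in auto)
  define B where "B = (\<Sum>i<n. \<bar>c i\<bar>)"
  have bnd: "\<bar>g x\<bar> \<le> B" for x
  proof -
    have "\<bar>g x\<bar> \<le> (\<Sum>i<n. \<bar>c i * indicator (A i) x\<bar>)" unfolding g by (rule sum_abs)
    also have "\<dots> \<le> B" unfolding B_def by (intro sum_mono) (auto simp: indicator_def)
    finally show ?thesis .
  qed
  have B0: "B \<ge> 0" unfolding B_def by (simp add: sum_nonneg)
  have "weak_norm (lebesgue_on {0..1}) 2 g \<le> ennreal (sqrt (B^2))"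
  proof (rule wn_le)
    fix s :: real assume s: "s > 0"
    show "emeasure (lebesgue_on {0..1}) {x \<in> space (lebesgue_on {0..1}). s < \<bar>g x\<bar>} \<le> ennreal (B^2 / s^2)"
    proof (cases "B \<le> s")
      case True
      then have e: "{x \<in> space (lebesgue_on {0..1}). s < \<bar>g x\<bar>} = {}" using bnd
        by (auto simp: not_less intro: order_trans)
      show ?thesis unfolding e by simp
    next
      case False
      then have "1 \<le> B^2 / s^2" using s by (simp add: power_mono)
      then have "ennreal 1 \<le> ennreal (B^2 / s^2)" by (rule ennreal_leI)
      then have o: "1 \<le> ennreal (B^2 / s^2)" by simp
      have "emeasure (lebesgue_on {0..1}) {x \<in> space (lebesgue_on {0..1}). s < \<bar>g x\<bar>} \<le> 1"
        using emeasure_L01_le1 by blast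
      from order_trans[OF this o] show ?thesis .
    qed
  qed simp
  then have "weak_norm (lebesgue_on {0..1}) 2 g < \<infinity>"
    by (rule le_less_trans) simp
  then have L: "g \<in> Lweak (lebesgue_on {0..1}) 2" unfolding Lweak_def using meas by simp
  show ?thesis unfolding Mweak_def
  proof (intro CollectI conjI allI impI L)
    fix e :: real assume e: "e > 0"
    have "(\<lambda>x. g x - g x) = (\<lambda>x. 0)" by simp
    then have "weak_norm (lebesgue_on {0..1}) 2 (\<lambda>x. g x - g x) < ennreal e"
      using e by (simp only: wn_zero) simp
    then show "\<exists>g'\<in>fin_char_span (lebesgue_on {0..1}). weak_norm (lebesgue_on {0..1}) 2 (\<lambda>x. g x - g' x) < ennreal e"
      using assms by (intro bexI[of _ g])
  qed
qed

lemma T_sum: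
  fixes T :: "(real \<Rightarrow> real) \<Rightarrow> ('a \<Rightarrow> real)" and M :: "'a measure"
  assumes lin: "\<forall>f \<in> Mweak (lebesgue_on {0..1}) 2. \<forall>g \<in> Mweak (lebesgue_on {0..1}) 2.
                 \<forall>a b::real. AE x in M. T (\<lambda>y. a * f y + b * g y) x = a * T f x + b * T g x"
  and fin: "finite S" and fcs: "\<forall>n\<in>S. g n \<in> fin_char_span (lebesgue_on {0..1})"
  shows "AE x in M. T (\<lambda>y. \<Sum>n\<in>S. a n * g n y) x = (\<Sum>n\<in>S. a n * T (g n) x)"
  using fin fcs
proof (induction S rule: finite_induct)
  case empty
  have z: "(\<lambda>y::real. 0::real) \<in> Mweak (lebesgue_on {0..1}) 2" by (rule fcs_Mweak[OF fcs_zero])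
  show ?case using lin[rule_format, OF z z, of 0 0] by simp
next
  case (insert n S)
  have gn: "g n \<in> Mweak (lebesgue_on {0..1}) 2" using insert.prems by (simp add: fcs_Mweak)
  have sS: "(\<lambda>y. \<Sum>n\<in>S. a n * g n y) \<in> Mweak (lebesgue_on {0..1}) 2"
    using insert.prems by (intro fcs_Mweak fcs_sum) (auto simp: insert.hyps)
  have e: "(\<lambda>y. \<Sum>n\<in>insert n S. a n * g n y) = (\<lambda>y. 1 * (\<lambda>y. \<Sum>n\<in>S. a n * g n y) y + a n * g n y)"
    using insert.hyps by (simp add: add.commute)
  have "AE x in M. T (\<lambda>y. 1 * (\<lambda>y. \<Sum>n\<in>S. a n * g n y) y + a n * g n y) x =
          1 * T (\<lambda>y. \<Sum>n\<in>S. a n * g n y) x + a n * T (g n) x"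
    by (rule lin[rule_format, OF sS gn])
  moreover have "AE x in M. T (\<lambda>y. \<Sum>n\<in>S. a n * g n y) x = (\<Sum>n\<in>S. a n * T (g n) x)"
    using insert.IH insert.prems by simp
  ultimately show ?case unfolding e
  proof eventually_elim
    case (elim x)
    then show ?case using insert.hyps by simp
  qed
qed




definition KK :: "nat \<Rightarrow> nat" where "KK m = m + 2^m"
definition psi :: "nat \<Rightarrow> nat \<Rightarrow> real" where "psi m u = sqrt (real (2^m) / real (u+1))"
definition lev :: "nat \<Rightarrow> nat \<Rightarrow> nat" where "lev m i = m + 2^m - 1 - i"
definition coef :: "nat \<Rightarrow> nat \<Rightarrow> nat \<Rightarrow> real" where
  "coef m i l = psi m ((l div 2^(2^m - 1 - i) + i) mod 2^m)"
definition Fi :: "nat \<Rightarrow> nat \<Rightarrow> real \<Rightarrow> real" where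
  "Fi m i = (\<lambda>y. \<Sum>l<2^(lev m i). coef m i l * haar (2^(lev m i) + l + 1) y)"
definition FF :: "nat \<Rightarrow> real \<Rightarrow> real" where
  "FF m = (\<lambda>y. \<Sum>i<2^m. 1 * Fi m i y)"

lemma psi_nonneg: "psi m u \<ge> 0" unfolding psi_def by simp

lemma Fi_eval:
  assumes x: "0 \<le> x" "x < 1" and i: "i < 2^m"
  shows "Fi m i x = psi m ((D (KK m) x div 2^(2^m) + i) mod 2^m) * eps (D (KK m) x) i"
proof -
  define k where "k = lev m i"
  have k1: "k + 1 = m + 2^m - i" using i unfolding k_def lev_def by simp
  have f: "Fi m i x = coef m i (D (k+1) x div 2) * (if even (D (k+1) x) then 1 else -1)"
    unfolding Fi_def k_def[symmetric] by (rule haar_sum_D[OF x])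
  have "D (k+1) x div 2 div 2^(2^m - 1 - i) = D (k+1) x div 2^(2^m - i)"
  proof -
    have "2^m - i = Suc (2^m - 1 - i)" using i by linarith
    then have p: "(2::nat)^(2^m - i) = 2 * 2^(2^m - 1 - i)" by simp
    show ?thesis unfolding p div_mult2_eq ..
  qed
  also have "\<dots> = D m x"
  proof -
    have a: "k + 1 - (2^m - i) = m" using i k1 by linarith
    have b: "2^m - i \<le> k + 1" using i k1 by linarith
    show ?thesis using D_div[OF x(1) b] unfolding a .
  qed
  also have "D m x = D (KK m) x div 2^(2^m)"
    using D_div[OF x(1), of "2^m" "KK m"] unfolding KK_def by simp
  finally have e1: "D (k+1) x div 2 div 2^(2^m - 1 - i) = D (KK m) x div 2^(2^m)" .
  have e2: "D (k+1) x = D (KK m) x div 2^i"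
    using D_div[OF x(1), of i "KK m"] i k1 unfolding KK_def by simp
  show ?thesis unfolding f coef_def e1 unfolding e2 eps_def by simp
qed

lemma haar_at_1:
  assumes l: "l < 2^k"
  shows "haar (2^k + l + 1) 1 = 0"
proof -
  have "2*l+2 \<le> (2::nat)^(k+1)" using l by simp
  then have "real (2*l+2) \<le> real ((2::nat)^(k+1))" by (simp only: of_nat_le_iff)
  then have h: "(real (2*l+1) + 1) / 2^(k+1) \<le> 1" by simp
  have h2: "(real (2*l) + 1) / 2^(k+1) \<le> 1"
  proof -
    have "(real (2*l) + 1) / 2^(k+1) \<le> (real (2*l+1) + 1) / 2^(k+1)"
      by (intro divide_right_mono) auto
    then show ?thesis using h by linarith
  qed
  show ?thesis unfolding haar_lvl[OF l] using h h2 by auto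
qed

lemma Fi_1: "Fi m i 1 = 0"
  unfolding Fi_def
proof (intro sum.neutral ballI)
  fix l :: nat assume "l \<in> {..<2 ^ lev m i}"
  then have "haar (2 ^ lev m i + l + 1) 1 = 0" by (intro haar_at_1) simp
  then show "coef m i l * haar (2 ^ lev m i + l + 1) 1 = 0" by simp
qed

lemma FF_1: "FF m 1 = 0"
  unfolding FF_def by (simp add: Fi_1)




lemma sum_mult_split:
  fixes f :: "nat \<Rightarrow> 'b::comm_monoid_add"
  shows "(\<Sum>w<T*M. f w) = (\<Sum>t<T. \<Sum>b<M. f (t*M + b))"
proof (induction T)
  case 0 then show ?case by simp
next
  case (Suc T)
  have "(\<Sum>w<Suc T * M. f w) = (\<Sum>w<T*M + M. f w)" by (simp add: add.commute)
  also have "\<dots> = (\<Sum>w<T*M. f w) + (\<Sum>b<M. f (T*M + b))"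
  proof -
    have "{..<T*M + M} = {..<T*M} \<union> {T*M..<T*M+M}" by auto
    then have "(\<Sum>w<T*M + M. f w) = (\<Sum>w<T*M. f w) + (\<Sum>w\<in>{T*M..<T*M+M}. f w)"
      by (simp add: sum.union_disjoint ivl_disj_int)
    also have "(\<Sum>w\<in>{T*M..<T*M+M}. f w) = (\<Sum>b<M. f (T*M + b))"
      using sum.shift_bounds_nat_ivl[of f 0 "T*M" M] by (simp add: lessThan_atLeast0 add.commute)
    finally show ?thesis .
  qed
  finally show ?case using Suc by simp
qed

lemma mod_shift_sum:
  fixes f :: "nat \<Rightarrow> 'b::comm_monoid_add"
  assumes N: "N > 0"
  shows "(\<Sum>t<N. f ((t + i) mod N)) = (\<Sum>u<N. f u)"
proof -
  have inj: "inj_on (\<lambda>t. (t + i) mod N) {..<N}"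
  proof (rule inj_onI)
    fix t t' assume "t \<in> {..<N}" "t' \<in> {..<N}" "(t + i) mod N = (t' + i) mod N"
    note h = this
    have key: "a = b" if "b \<le> a" "a < N" "(a + i) mod N = (b + i) mod N" for a b
    proof (rule ccontr)
      assume "a \<noteq> b"
      then have pos: "0 < a - b" using that(1) by simp
      have "N dvd (a + i) - (b + i)" using that(1,3) mod_eq_dvd_iff_nat[of "b+i" "a+i" N] by simp
      then have "N dvd a - b" by simp
      then have "N \<le> a - b" using pos by (rule dvd_imp_le)
      then show False using that(2) by simp
    qed
    show "t = t'"
    proof (cases "t' \<le> t")
      case True then show ?thesis using key[of t' t] h by simp
    next
      case False then show ?thesis using key[of t t'] h by simp
    qed
  qed
  have "(\<lambda>t. (t + i) mod N) ` {..<N} = {..<N}"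
  proof (rule endo_inj_surj)
    show "(\<lambda>t. (t + i) mod N) ` {..<N} \<subseteq> {..<N}" using N by auto
  qed (use inj in auto)
  then have "bij_betw (\<lambda>t. (t + i) mod N) {..<N} {..<N}" using inj by (simp add: bij_betw_def)
  then show ?thesis by (rule sum.reindex_bij_betw)
qed

lemma card_as_sum: "real (card {w. w < (X::nat) \<and> P w}) = (\<Sum>w<X. if P w then 1 else 0)"
proof -
  have "(\<Sum>w<X. if P w then (1::real) else 0) = (\<Sum>w\<in>{w\<in>{..<X}. P w}. 1)"
    by (rule sum.inter_filter[symmetric]) simp
  also have "\<dots> = real (card {w\<in>{..<X}. P w})" by simp
  also have "{w\<in>{..<X}. P w} = {w. w < X \<and> P w}" by auto
  finally show ?thesis by simp
qed

lemma eps_shift: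
  assumes b: "b < 2^N" and i: "i < N"
  shows "eps (t * 2^N + b) i = eps b i"
proof -
  have "(2::nat)^N = 2^(N-i) * 2^i" using i by (simp add: power_add[symmetric])
  then have "(t * 2^N + b) div 2^i = (b + (t * 2^(N-i)) * 2^i) div 2^i"
    by (simp add: mult.assoc add.commute)
  also have "\<dots> = b div 2^i + t * 2^(N-i)" by (subst div_mult_self1) auto
  finally have "(t * 2^N + b) div 2^i = b div 2^i + t * 2^(N-i)" .
  moreover have "even (t * (2::nat)^(N-i))" using i by simp
  ultimately show ?thesis unfolding eps_def by simp
qed

lemma split_div: "b < 2^N \<Longrightarrow> (t * 2^N + b) div 2^N = (t::nat)" by simp
lemma split_mod: "b < 2^N \<Longrightarrow> (t * 2^N + b) mod 2^N = (b::nat)" by simp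

lemma psi_count:
  assumes s: "s > 0"
  shows "real (card {u. u < 2^m \<and> s < psi m u}) \<le> 2^m / s^2"
proof -
  define y where "y = 2^m / s^2"
  have y0: "y > 0" using s unfolding y_def by simp
  have sub: "{u. u < 2^m \<and> s < psi m u} \<subseteq> {..<nat \<lceil>y - 1\<rceil>}"
  proof
    fix u assume "u \<in> {u. u < 2^m \<and> s < psi m u}"
    then have "s < sqrt (2^m / real (u+1))" unfolding psi_def by simp
    then have "s^2 < (sqrt (2^m / real (u+1)))^2" using s by (intro power_strict_mono) auto
    then have "s^2 < 2^m / real (u+1)" by simp
    then have "real (u+1) * s^2 < 2^m" by (simp add: field_simps)
    then have "real (u+1) < y" unfolding y_def using s by (simp add: field_simps)
    then have "real u < y - 1" by simp
    then have "real u < real_of_int \<lceil>y - 1\<rceil>" by (meson le_of_int_ceiling order_less_le_trans)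
    then have "int u < \<lceil>y - 1\<rceil>" by (metis of_int_less_iff of_int_of_nat_eq)
    then show "u \<in> {..<nat \<lceil>y - 1\<rceil>}" by (simp add: zless_nat_eq_int_zless)
  qed
  have "card {u. u < 2^m \<and> s < psi m u} \<le> nat \<lceil>y - 1\<rceil>"
    using card_mono[OF _ sub] by simp
  then have "real (card {u. u < 2^m \<and> s < psi m u}) \<le> real (nat \<lceil>y - 1\<rceil>)" by simp
  also have "\<dots> \<le> y" using y0 by linarith
  finally show ?thesis unfolding y_def .
qed

lemma psi_S2: "(\<Sum>u<2^m. (psi m u)^2) = 2^m * harm (2^m)"
proof -
  have "(\<Sum>u<2^m. (psi m u)^2) = (\<Sum>u<(2::nat)^m. 2^m * inverse (real (Suc u)))"
    by (rule sum.cong) (auto simp: psi_def field_simps)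
  also have "\<dots> = 2^m * harm (2^m)" by (simp add: harm_altdef sum_distrib_left)
  finally show ?thesis .
qed




lemma abs_eps: "\<bar>eps w i\<bar> = 1" unfolding eps_def by simp

lemma KK_pow: "(2::nat)^(KK m) = 2^m * 2^(2^m)" unfolding KK_def by (simp add: power_add)

lemma Fi_set:
  assumes i: "i < 2^m" and s0: "s \<ge> 0"
  shows "{x \<in> space (lebesgue_on {0..1}). s < \<bar>Fi m i x\<bar>} =
         {x \<in> {0..1}. x < 1 \<and> s < psi m ((D (KK m) x div 2^(2^m) + i) mod 2^m)}"
proof (intro set_eqI iffI)
  fix x assume x: "x \<in> {x \<in> space (lebesgue_on {0..1}). s < \<bar>Fi m i x\<bar>}"
  then have x01: "0 \<le> x" "x \<le> 1" by auto
  have "x \<noteq> 1" using x Fi_1[of m i] s0 by auto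
  then have x1: "x < 1" using x01 by simp
  then show "x \<in> {x \<in> {0..1}. x < 1 \<and> s < psi m ((D (KK m) x div 2^(2^m) + i) mod 2^m)}"
    using x x01 Fi_eval[OF x01(1) x1 i] by (simp add: abs_mult abs_eps psi_nonneg)
next
  fix x assume x: "x \<in> {x \<in> {0..1}. x < 1 \<and> s < psi m ((D (KK m) x div 2^(2^m) + i) mod 2^m)}"
  then have x01: "0 \<le> x" "x < 1" by auto
  then show "x \<in> {x \<in> space (lebesgue_on {0..1}). s < \<bar>Fi m i x\<bar>}"
    using x Fi_eval[OF x01 i] by (simp add: abs_mult abs_eps psi_nonneg)
qed

lemma Fi_weak:
  assumes i: "i < 2^m"
  shows "weak_norm (lebesgue_on {0..1}) 2 (Fi m i) \<le> 1"
proof -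
  have "weak_norm (lebesgue_on {0..1}) 2 (Fi m i) \<le> ennreal (sqrt 1)"
  proof (rule wn_le)
    fix s :: real assume s: "s > 0"
    define P where "P w = (s < psi m ((w div 2^(2^m) + i) mod 2^m))" for w
    have e: "emeasure (lebesgue_on {0..1}) {x \<in> space (lebesgue_on {0..1}). s < \<bar>Fi m i x\<bar>} =
          ennreal (real (card {w. w < 2^(KK m) \<and> P w}) / 2^(KK m))"
      unfolding Fi_set[OF i less_imp_le[OF s]] P_def by (rule meas_D)
    have "real (card {w. w < 2^(KK m) \<and> P w}) = (\<Sum>w<2^m * 2^(2^m). if P w then 1 else 0)"
      unfolding card_as_sum KK_pow ..
    also have "\<dots> = (\<Sum>t<2^m. \<Sum>b<2^(2^m). if P (t * 2^(2^m) + b) then 1 else 0)"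
      by (rule sum_mult_split)
    also have "\<dots> = (\<Sum>t<2^m. 2^(2^m) * (if s < psi m ((t + i) mod 2^m) then 1 else 0))"
      by (rule sum.cong) (auto simp: P_def split_div)
    also have "\<dots> = 2^(2^m) * (\<Sum>t<2^m. (if s < psi m ((t + i) mod 2^m) then 1 else 0))"
      by (simp add: sum_distrib_left)
    also have "(\<Sum>t<2^m. (if s < psi m ((t + i) mod 2^m) then 1 else 0)) =
               (\<Sum>u<(2::nat)^m. (if s < psi m u then 1 else (0::real)))"
      by (rule mod_shift_sum[of "2^m" "\<lambda>u. if s < psi m u then 1 else (0::real)"]) simp
    also have "\<dots> = real (card {u. u < 2^m \<and> s < psi m u})"
      by (rule card_as_sum[symmetric])
    finally have "real (card {w. w < 2^(KK m) \<and> P w}) = 2^(2^m) * real (card {u. u < 2^m \<and> s < psi m u})" .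
    also have "\<dots> \<le> 2^(2^m) * (2^m / s^2)"
      by (rule mult_left_mono[OF psi_count[OF s]]) simp
    finally have "real (card {w. w < 2^(KK m) \<and> P w}) \<le> 2^(2^m) * (2^m / s^2)" .
    then have "real (card {w. w < 2^(KK m) \<and> P w}) / 2^(KK m) \<le> 1 / s^2"
      unfolding KK_def by (simp add: power_add field_simps)
    then show "emeasure (lebesgue_on {0..1}) {x \<in> space (lebesgue_on {0..1}). s < \<bar>Fi m i x\<bar>} \<le> ennreal (1 / s^2)"
      unfolding e by (rule ennreal_leI)
  qed simp
  then show ?thesis by simp
qed




definition Phi :: "nat \<Rightarrow> nat \<Rightarrow> real" where
  "Phi m w = (\<Sum>i<2^m. psi m ((w div 2^(2^m) + i) mod 2^m) * eps w i)"

lemma FF_eval: "0 \<le> x \<Longrightarrow> x < 1 \<Longrightarrow> FF m x = Phi m (D (KK m) x)"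
  unfolding FF_def Phi_def by (auto intro!: sum.cong simp: Fi_eval)

lemma FF_set:
  assumes s0: "s \<ge> 0"
  shows "{x \<in> space (lebesgue_on {0..1}). s < \<bar>FF m x\<bar>} =
         {x \<in> {0..1}. x < 1 \<and> s < \<bar>Phi m (D (KK m) x)\<bar>}"
proof (intro set_eqI iffI)
  fix x assume x: "x \<in> {x \<in> space (lebesgue_on {0..1}). s < \<bar>FF m x\<bar>}"
  then have x01: "0 \<le> x" "x \<le> 1" by auto
  have "x \<noteq> 1" using x FF_1[of m] s0 by auto
  then have x1: "x < 1" using x01 by simp
  then show "x \<in> {x \<in> {0..1}. x < 1 \<and> s < \<bar>Phi m (D (KK m) x)\<bar>}"
    using x x01 FF_eval[OF x01(1) x1] by simp
next
  fix x assume x: "x \<in> {x \<in> {0..1}. x < 1 \<and> s < \<bar>Phi m (D (KK m) x)\<bar>}"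
  then have x01: "0 \<le> x" "x < 1" by auto
  then show "x \<in> {x \<in> space (lebesgue_on {0..1}). s < \<bar>FF m x\<bar>}"
    using x FF_eval[OF x01] by simp
qed

lemma Phi_split:
  assumes b: "b < 2^(2^m)"
  shows "Phi m (t * 2^(2^m) + b) = Xs (2^m) (\<lambda>i. psi m ((t + i) mod 2^m)) b"
  unfolding Phi_def Xs_def using b by (intro sum.cong) (auto simp: split_div eps_shift)

lemma FF_weak_ge:
  fixes m :: nat
  defines "S2 \<equiv> 2^m * harm (2^m) :: real"
  shows "ennreal (sqrt S2 / 2 * sqrt (3/16)) \<le> weak_norm (lebesgue_on {0..1}) 2 (FF m)"
proof -
  have S2pos: "S2 > 0" unfolding S2_def by simp
  define s where "s = sqrt S2 / 2"
  have s: "s > 0" unfolding s_def using S2pos by simp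
  have ss: "s^2 = S2 / 4" unfolding s_def using S2pos by (simp add: power_divide)
  define P where "P w = (s < \<bar>Phi m w\<bar>)" for w
  define cnt where "cnt = real (card {w. w < 2^(KK m) \<and> P w})"
  have e: "emeasure (lebesgue_on {0..1}) {x \<in> space (lebesgue_on {0..1}). s < \<bar>FF m x\<bar>} =
        ennreal (cnt / 2^(KK m))"
    unfolding FF_set[OF less_imp_le[OF s]] P_def cnt_def by (rule meas_D)
  have lt: "s < \<bar>X\<bar> \<longleftrightarrow> S2/4 < X^2" for X :: real
  proof -
    have "s < \<bar>X\<bar> \<longleftrightarrow> s^2 < \<bar>X\<bar>^2"
      using s by (metis abs_ge_zero abs_of_pos power_less_imp_less_base power_strict_mono zero_less_numeral)
    then show ?thesis unfolding ss by simp
  qed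
  have "cnt = (\<Sum>w<2^m * 2^(2^m). if P w then 1 else 0)"
    unfolding cnt_def card_as_sum KK_pow ..
  also have "\<dots> = (\<Sum>t<2^m. \<Sum>b<2^(2^m). if P (t * 2^(2^m) + b) then 1 else 0)"
    by (rule sum_mult_split)
  also have "\<dots> = (\<Sum>t<2^m. real (card {b. b < 2^(2^m) \<and> S2/4 < (Xs (2^m) (\<lambda>i. psi m ((t + i) mod 2^m)) b)^2}))"
  proof (rule sum.cong[OF refl])
    fix t
    have "(\<Sum>b<2^(2^m). if P (t * 2^(2^m) + b) then 1 else (0::real)) =
          (\<Sum>b<2^(2^m). if S2/4 < (Xs (2^m) (\<lambda>i. psi m ((t + i) mod 2^m)) b)^2 then 1 else 0)"
      by (rule sum.cong) (auto simp: P_def Phi_split lt)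
    then show "(\<Sum>b<2^(2^m). if P (t * 2^(2^m) + b) then 1 else (0::real)) =
          real (card {b. b < 2^(2^m) \<and> S2/4 < (Xs (2^m) (\<lambda>i. psi m ((t + i) mod 2^m)) b)^2})"
      by (simp add: card_as_sum)
  qed
  also have "\<dots> \<ge> (\<Sum>t<(2::nat)^m. 3 * 2^(2^m) / 16)"
  proof (rule sum_mono)
    fix t
    have sq: "(\<Sum>i<2^m. (psi m ((t + i) mod 2^m))^2) = S2"
      using mod_shift_sum[of "2^m" "\<lambda>u. (psi m u)^2" t] psi_S2[of m] unfolding S2_def by (simp add: add.commute)
    show "3 * 2^(2^m) / 16 \<le> real (card {b. b < 2^(2^m) \<and> S2/4 < (Xs (2^m) (\<lambda>i. psi m ((t + i) mod 2^m)) b)^2})"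
      using PZ[of "\<lambda>i. psi m ((t + i) mod 2^m)" "2^m"] S2pos unfolding sq by simp
  qed
  finally have cnt_ge: "3 * 2^(2^m) / 16 * 2^m \<le> cnt" by (simp add: mult.commute)
  define mu where "mu = cnt / 2^(KK m)"
  have mu: "3/16 \<le> mu" unfolding mu_def using cnt_ge unfolding KK_def
    by (simp add: power_add field_simps)
  have "ennreal (s * sqrt mu) \<le> weak_norm (lebesgue_on {0..1}) 2 (FF m)"
    by (rule wn_ge[OF s]) (use e mu in \<open>auto simp: mu_def cnt_def\<close>)
  moreover have "s * sqrt (3/16) \<le> s * sqrt mu" using mu s by simp
  ultimately show ?thesis unfolding s_def by (meson ennreal_leI order_trans)
qed




lemma Fi_fcs: "Fi m i \<in> fin_char_span (lebesgue_on {0..1})"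
  unfolding Fi_def
proof (rule fcs_sum[where g="\<lambda>l. haar (2^(lev m i) + l + 1)"])
  show "\<forall>n\<in>{..<2 ^ lev m i}. haar (2 ^ lev m i + n + 1) \<in> fin_char_span (lebesgue_on {0..1})"
  proof
    fix n :: nat assume "n \<in> {..<2 ^ lev m i}"
    then show "haar (2 ^ lev m i + n + 1) \<in> fin_char_span (lebesgue_on {0..1})"
      by (intro haar_fcs) simp
  qed
qed simp

lemma FF_fcs: "FF m \<in> fin_char_span (lebesgue_on {0..1})"
  unfolding FF_def by (rule fcs_sum[where g="Fi m"]) (auto simp: Fi_fcs)

lemma idx_inj:
  assumes "i < 2^m" "j < 2^m" "l < 2^(lev m i)" "l' < 2^(lev m j)"
    and eq: "2^(lev m i) + l + 1 = 2^(lev m j) + l' + (1::nat)"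
  shows "i = j \<and> l = l'"
proof -
  have eq': "2^(lev m i) + (l + 1) = 2^(lev m j) + (l' + (1::nat))" using eq by simp
  have "lev m i = lev m j"
    by (rule pow_rep_unique[OF eq']) (use assms in auto)
  then have "i = j" using assms(1,2) unfolding lev_def by linarith
  then show ?thesis using eq by simp
qed

lemma one_nonzero:
  fixes v :: "nat \<Rightarrow> real"
  assumes s: "s \<ge> 0" and big: "s < \<bar>\<Sum>i<N. v i\<bar>"
    and orth: "\<forall>i<N. \<forall>j<N. i \<noteq> j \<longrightarrow> v i * v j = 0"
  shows "\<exists>i<N. s < \<bar>v i\<bar>"
proof (cases "\<forall>i<N. v i = 0")
  case True
  then have "(\<Sum>i<N. v i) = 0" by simp
  then show ?thesis using big s by simp
next
  case False
  then obtain i0 where i0: "i0 < N" "v i0 \<noteq> 0" by blast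
  have z: "v j = 0" if "j < N" "j \<noteq> i0" for j
    using orth i0 that by (metis mult_eq_0_iff)
  have "(\<Sum>i<N. v i) = v i0 + (\<Sum>i\<in>{..<N} - {i0}. v i)"
    using i0 by (simp add: sum.remove)
  also have "(\<Sum>i\<in>{..<N} - {i0}. v i) = 0" using z by (intro sum.neutral) auto
  finally show ?thesis using big i0 by auto
qed

lemma harm_big: "\<exists>m::nat. (B::real) < harm (2^m)"
proof -
  obtain m :: nat where m: "B / ln 2 < real m" using reals_Archimedean2 by blast
  define n :: nat where "n = 2^m"
  have "B < real m * ln 2" using m by (simp add: field_simps)
  also have "real m * ln 2 = ln (real n)" unfolding n_def by (simp add: ln_realpow)
  also have "ln (real n) \<le> ln (real n + 1)"
  proof -
    have p: "0 < real n" unfolding n_def by simp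
    have q: "0 < real n + 1" by simp
    show ?thesis using ln_le_cancel_iff[OF p q] by simp
  qed
  also have "\<dots> \<le> harm n" by (rule ln_le_harm)
  finally show ?thesis unfolding n_def by blast
qed




theorem proposition8:
  fixes M :: "'a measure" and T :: "(real \<Rightarrow> real) \<Rightarrow> ('a \<Rightarrow> real)"
  assumes into: "\<forall>f \<in> Mweak (lebesgue_on {0..1}) 2. T f \<in> Lweak M 2"
    and linear: "\<forall>f \<in> Mweak (lebesgue_on {0..1}) 2. \<forall>g \<in> Mweak (lebesgue_on {0..1}) 2.
                 \<forall>a b::real. AE x in M. T (\<lambda>y. a * f y + b * g y) x = a * T f x + b * T g x"
    and bounded: "\<exists>C>0. \<forall>f \<in> Mweak (lebesgue_on {0..1}) 2.
                 weak_norm M 2 (T f) \<le> ennreal C * weak_norm (lebesgue_on {0..1}) 2 f"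
    and below: "\<exists>c>0. \<forall>f \<in> Mweak (lebesgue_on {0..1}) 2.
                 ennreal c * weak_norm (lebesgue_on {0..1}) 2 f \<le> weak_norm M 2 (T f)"
  shows "\<not> (\<forall>n m. 1 \<le> n \<and> 1 \<le> m \<and> n \<noteq> m \<longrightarrow>
              (AE x in M. min \<bar>T (haar n) x\<bar> \<bar>T (haar m) x\<bar> = 0))"
proof
  assume disj: "\<forall>n m. 1 \<le> n \<and> 1 \<le> m \<and> n \<noteq> m \<longrightarrow>
              (AE x in M. min \<bar>T (haar n) x\<bar> \<bar>T (haar m) x\<bar> = 0)"
  obtain C where C0: "C > 0" and C: "\<forall>f \<in> Mweak (lebesgue_on {0..1}) 2.
                 weak_norm M 2 (T f) \<le> ennreal C * weak_norm (lebesgue_on {0..1}) 2 f"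
    using bounded by blast
  obtain c where c0: "c > 0" and c: "\<forall>f \<in> Mweak (lebesgue_on {0..1}) 2.
                 ennreal c * weak_norm (lebesgue_on {0..1}) 2 f \<le> weak_norm M 2 (T f)"
    using below by blast
  obtain m :: nat where m: "64 * C^2 / (3 * c^2) < harm (2^m)" using harm_big by blast
  define N :: nat where "N = 2^m"
  define idx where "idx p = 2^(lev m (fst p)) + snd p + 1" for p :: "nat \<times> nat"
  define HS :: "(nat \<times> nat) set" where "HS = Sigma {..<N} (\<lambda>i. {..<2^(lev m i)})"
  have finHS: "finite HS" unfolding HS_def by simp
  have FiM: "Fi m i \<in> Mweak (lebesgue_on {0..1}) 2" for i by (rule fcs_Mweak[OF Fi_fcs])
  have FFM: "FF m \<in> Mweak (lebesgue_on {0..1}) 2" by (rule fcs_Mweak[OF FF_fcs])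
  have TFi: "weak_norm M 2 (T (Fi m i)) \<le> ennreal C" if i: "i < N" for i
  proof -
    have "weak_norm M 2 (T (Fi m i)) \<le> ennreal C * weak_norm (lebesgue_on {0..1}) 2 (Fi m i)"
      using C FiM by blast
    also have "\<dots> \<le> ennreal C * 1"
      using Fi_weak[of i m] i unfolding N_def by (intro mult_left_mono) auto
    finally show ?thesis by simp
  qed
  have TFi_meas: "emeasure M {x \<in> space M. s < \<bar>T (Fi m i) x\<bar>} \<le> ennreal ((C / s)^2)"
    if i: "i < N" and s: "s > 0" for i s
    by (rule wn_meas[OF TFi[OF i] _ s]) (use C0 in simp)
  have sets_Fi: "{x \<in> space M. s < \<bar>T (Fi m i) x\<bar>} \<in> sets M" for i s
  proof -
    have "T (Fi m i) \<in> borel_measurable M" using into FiM unfolding Lweak_def by blast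
    then have "(\<lambda>x. \<bar>T (Fi m i) x\<bar>) \<in> borel_measurable M" by (rule borel_measurable_abs)
    then show ?thesis unfolding borel_measurable_iff_greater by blast
  qed
  have AE1: "AE x in M. \<forall>p\<in>HS. \<forall>q\<in>HS. p \<noteq> q \<longrightarrow> T (haar (idx p)) x * T (haar (idx q)) x = 0"
  proof (rule eventually_ball_finite[OF finHS], rule ballI)
    fix p assume p: "p \<in> HS"
    show "AE x in M. \<forall>q\<in>HS. p \<noteq> q \<longrightarrow> T (haar (idx p)) x * T (haar (idx q)) x = 0"
    proof (rule eventually_ball_finite[OF finHS], rule ballI)
      fix q assume q: "q \<in> HS"
      show "AE x in M. p \<noteq> q \<longrightarrow> T (haar (idx p)) x * T (haar (idx q)) x = 0"
      proof (cases "p = q")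
        case True then show ?thesis by simp
      next
        case False
        have "idx p \<noteq> idx q"
        proof
          assume "idx p = idx q"
          then have "fst p = fst q \<and> snd p = snd q"
            using p q unfolding HS_def idx_def N_def
            by (intro idx_inj[of "fst p" m "fst q" "snd p" "snd q"]) auto
          then show False using False by (simp add: prod_eq_iff)
        qed
        then have "AE x in M. min \<bar>T (haar (idx p)) x\<bar> \<bar>T (haar (idx q)) x\<bar> = 0"
          using disj unfolding idx_def by auto
        then show ?thesis
          by eventually_elim (auto simp: min_def split: if_splits)
      qed
    qed
  qed
  have AE2: "AE x in M. \<forall>i\<in>{..<N}. T (Fi m i) x =
      (\<Sum>l<2^(lev m i). coef m i l * T (haar (idx (i, l))) x)"
  proof (rule eventually_ball_finite, simp, rule ballI)
    fix i assume "i \<in> {..<N}"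
    have "AE x in M. T (\<lambda>y. \<Sum>l\<in>{..<2^(lev m i)}. coef m i l * haar (2^(lev m i) + l + 1) y) x =
       (\<Sum>l\<in>{..<2^(lev m i)}. coef m i l * T (haar (2^(lev m i) + l + 1)) x)"
    proof (rule T_sum[OF linear])
      show "\<forall>n\<in>{..<2 ^ lev m i}. haar (2 ^ lev m i + n + 1) \<in> fin_char_span (lebesgue_on {0..1})"
      proof
        fix n :: nat assume "n \<in> {..<2 ^ lev m i}"
        then show "haar (2 ^ lev m i + n + 1) \<in> fin_char_span (lebesgue_on {0..1})"
          by (intro haar_fcs) simp
      qed
    qed simp
    then show "AE x in M. T (Fi m i) x = (\<Sum>l<2^(lev m i). coef m i l * T (haar (idx (i, l))) x)"
      unfolding Fi_def idx_def by simp
  qed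
  have AE3: "AE x in M. T (FF m) x = (\<Sum>i<N. 1 * T (Fi m i) x)"
  proof -
    have "AE x in M. T (\<lambda>y. \<Sum>i\<in>{..<N}. 1 * Fi m i y) x = (\<Sum>i\<in>{..<N}. 1 * T (Fi m i) x)"
      by (rule T_sum[OF linear]) (auto simp: Fi_fcs)
    then show ?thesis unfolding FF_def N_def by simp
  qed
  have TFF_meas: "emeasure M {x \<in> space M. s < \<bar>T (FF m) x\<bar>} \<le> ennreal (real N * C^2 / s^2)"
    if s: "s > 0" for s
  proof -
    have "AE x in M. x \<in> {x \<in> space M. s < \<bar>T (FF m) x\<bar>} \<longrightarrow>
                     x \<in> (\<Union>i\<in>{..<N}. {x \<in> space M. s < \<bar>T (Fi m i) x\<bar>})"
      using AE1 AE2 AE3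
    proof eventually_elim
      case (elim x)
      show ?case
      proof
        assume xin: "x \<in> {x \<in> space M. s < \<bar>T (FF m) x\<bar>}"
        define v where "v i = T (Fi m i) x" for i
        have big: "s < \<bar>\<Sum>i<N. v i\<bar>" using xin elim(3) unfolding v_def by simp
        have orth: "\<forall>i<N. \<forall>j<N. i \<noteq> j \<longrightarrow> v i * v j = 0"
        proof (intro allI impI)
          fix i j assume ij: "i < N" "j < N" "i \<noteq> j"
          have "v i * v j = (\<Sum>l<2^(lev m i). coef m i l * T (haar (idx (i, l))) x) *
                            (\<Sum>l'<2^(lev m j). coef m j l' * T (haar (idx (j, l'))) x)"
            using elim(2) ij unfolding v_def by simp
          also have "\<dots> = (\<Sum>l<2^(lev m i). \<Sum>l'<2^(lev m j).
                 (coef m i l * coef m j l') * (T (haar (idx (i, l))) x * T (haar (idx (j, l'))) x))"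
            by (simp add: sum_product algebra_simps)
          also have "\<dots> = 0"
          proof (intro sum.neutral ballI)
            fix l l' :: nat assume l: "l \<in> {..<2^(lev m i)}" and l': "l' \<in> {..<2^(lev m j)}"
            have "(i, l) \<in> HS" "(j, l') \<in> HS" "(i, l) \<noteq> (j, l')"
              using ij l l' unfolding HS_def by auto
            then have "T (haar (idx (i, l))) x * T (haar (idx (j, l'))) x = 0"
              using elim(1) by blast
            then show "(coef m i l * coef m j l') * (T (haar (idx (i, l))) x * T (haar (idx (j, l'))) x) = 0"
              by simp
          qed
          finally show "v i * v j = 0" .
        qed
        obtain i where "i < N" "s < \<bar>v i\<bar>"
          using one_nonzero[OF less_imp_le[OF s] big orth] by blast
        then show "x \<in> (\<Union>i\<in>{..<N}. {x \<in> space M. s < \<bar>T (Fi m i) x\<bar>})"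
          using xin unfolding v_def by auto
      qed
    qed
    then have "emeasure M {x \<in> space M. s < \<bar>T (FF m) x\<bar>} \<le>
               emeasure M (\<Union>i\<in>{..<N}. {x \<in> space M. s < \<bar>T (Fi m i) x\<bar>})"
      by (rule emeasure_mono_AE) (auto intro: sets_Fi)
    also have "\<dots> \<le> (\<Sum>i\<in>{..<N}. emeasure M {x \<in> space M. s < \<bar>T (Fi m i) x\<bar>})"
      by (rule emeasure_subadditive_finite) (auto intro: sets_Fi)
    also have "\<dots> \<le> (\<Sum>i\<in>{..<N}. ennreal ((C / s)^2))"
      by (rule sum_mono) (auto intro: TFi_meas s)
    also have "\<dots> = ennreal (real N * C^2 / s^2)"
      by (simp add: ennreal_of_nat_eq_real_of_nat ennreal_mult'[symmetric] power_divide)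
    finally show ?thesis .
  qed
  have TFF: "weak_norm M 2 (T (FF m)) \<le> ennreal (sqrt (real N * C^2))"
    by (rule wn_le) (use TFF_meas in auto)
  define S2 :: real where "S2 = 2^m * harm (2^m)"
  have "ennreal c * ennreal (sqrt S2 / 2 * sqrt (3/16)) \<le> ennreal c * weak_norm (lebesgue_on {0..1}) 2 (FF m)"
    using FF_weak_ge[of m] unfolding S2_def by (intro mult_left_mono) auto
  also have "\<dots> \<le> weak_norm M 2 (T (FF m))" using c FFM by blast
  also note TFF
  finally have "ennreal (c * (sqrt S2 / 2 * sqrt (3/16))) \<le> ennreal (sqrt (real N * C^2))"
    using c0 by (simp add: ennreal_mult'[symmetric])
  then have ineq: "c * (sqrt S2 / 2 * sqrt (3/16)) \<le> sqrt (real N * C^2)"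
    by (simp add: ennreal_le_iff)
  have S2pos: "S2 \<ge> 0" unfolding S2_def by (intro mult_nonneg_nonneg) (auto simp: harm_nonneg)
  have "(c * (sqrt S2 / 2 * sqrt (3/16)))^2 \<le> (sqrt (real N * C^2))^2"
    using ineq c0 S2pos by (intro power_mono) auto
  then have "c^2 * S2 * 3 / 64 \<le> real N * C^2"
    using S2pos by (simp add: power_mult_distrib power_divide real_sqrt_pow2)
  then have "c^2 * harm (2^m) * 3 / 64 * 2^m \<le> C^2 * 2^m"
    unfolding S2_def N_def by (simp add: algebra_simps)
  then have "c^2 * harm (2^m) * 3 / 64 \<le> C^2" by simp
  then have "harm (2^m) \<le> 64 * C^2 / (3 * c^2)"
    using c0 by (simp add: field_simps)
  then show False using m by simp
qed


end
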